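(* Let $m,k$ be positive integers and suppose $q^mt_1t_2\cdots t_k=1$ (i.e. regard $q,t_1,\ldots,t_{k-1}$ as independent variables and $t_k=q^{-m}(t_1\cdots t_{k-1})^{-1}$). Then $$\sum_{\text{cyclic permutations of }t_1,\ldots,t_k}\ \ \widetilde{\sum_{1\le i_1\le\cdots\le i_k\le m}}\ \left\{\begin{matrix}i_1,\ldots,i_k\\ t_1,\ldots,t_k\end{matrix}\right\}_m=\frac{m^{k-1}}{(k-1)!}.$$ In particular the left side is independent of $q,t_1,\ldots,t_k$.
   Context: $(a)_n:=\prod_{j=0}^{n-1}(1-aq^j)$ (so $(a)_0=1$). For integers $1\le i_1\le\cdots\le i_k\le m$, $$\left\{\begin{matrix}i_1,\ldots,i_k\\ t_1,\ldots,t_k\end{matrix}\right\}_m:=\frac{1}{(q)_{i_1-1}(q^{i_1}t_1)_{i_2-i_1}(q^{i_2}t_1t_2)_{i_3-i_2}\cdots(q^{i_k}t_1\cdots t_k)_{m-i_k}}.$$ For a function $f(i_1,\ldots,i_k)$, $\widetilde{\sum}_{1\le i_1\le\cdots\le i_k\le m}f:=\sum_{1\le i_1\le\cdots\le i_k\le m}f(i_1,\ldots,i_k)/\#\mathrm{Stab}(i_1,\ldots,i_k)$, where $\mathrm{Stab}(i_1,\ldots,i_k)$ is the set of permutations of $\{1,\ldots,k\}$ fixing the tuple (so its order is the product of factorials of the multiplicities). The outer sum runs over the $k$ cyclic rotations $(t_1,\ldots,t_k)\mapsto(t_{j+1},\ldots,t_k,t_1,\ldots,t_j)$, $0\le j<k$,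 applied to the variables in the summand. *)

theory Defs
  imports Complex_Main "HOL-Combinatorics.Permutations"
begin

definition qpoch :: "complex \<Rightarrow> complex \<Rightarrow> nat \<Rightarrow> complex" where
  "qpoch q a n = (\<Prod>j<n. (1 - a * q ^ j))"

text \<open>Denominator of the bracket symbol {i_1..i_k ; t_1..t_k}_m, with 0-based lists
  i = [i_1,...,i_k], t = [t_1,...,t_k]:
  (q)_{i_1-1} * prod_{r} (q^{i_r} t_1...t_r)_{i_{r+1}-i_r}, where i_{k+1} := m.\<close>
definition bracket_denom :: "nat \<Rightarrow> complex \<Rightarrow> complex list \<Rightarrow> nat list \<Rightarrow> complex" where
  "bracket_denom m q t i =
     qpoch q q (i ! 0 - 1) *
     (\<Prod>r<length i. qpoch q (q ^ (i ! r) * (\<Prod>s\<le>r. t ! s))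
                        ((if Suc r < length i then i ! Suc r else m) - i ! r))"

definition bracket :: "nat \<Rightarrow> complex \<Rightarrow> complex list \<Rightarrow> nat list \<Rightarrow> complex" where
  "bracket m q t i = 1 / bracket_denom m q t i"

definition index_tuples :: "nat \<Rightarrow> nat \<Rightarrow> nat list set" where
  "index_tuples k m = {i. length i = k \<and> sorted i \<and> set i \<subseteq> {1..m}}"

definition stab :: "nat list \<Rightarrow> (nat \<Rightarrow> nat) set" where
  "stab i = {p. p permutes {0..<length i} \<and> (\<forall>j<length i. i ! (p j) = i ! j)}"

definition tilde_sum :: "nat \<Rightarrow> complex \<Rightarrow> complex list \<Rightarrow> complex" where
  "tilde_sum m q t = (\<Sum>i\<in>index_tuples (length t) m. bracket m q t i / of_nat (card (stab i)))"

end

theory Submission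
  imports Defs "HOL-Computational_Algebra.Polynomial"
begin

lemma lagrange_sum:
  fixes x :: "nat \<Rightarrow> complex"
  assumes nz: "\<And>i. i < n \<Longrightarrow> x i \<noteq> 0"
    and dist: "\<And>i j. i < n \<Longrightarrow> j < n \<Longrightarrow> i \<noteq> j \<Longrightarrow> x i \<noteq> x j"
    and npos: "n > 0"
  shows "(\<Sum>r<n. 1 / (\<Prod>s\<in>{..<n}-{r}. (1 - x s / x r))) = 1"
proof -
  define D where "D r = (\<Prod>s\<in>{..<n}-{r}. (x r - x s))" for r
  define B where "B r = (\<Prod>s\<in>{..<n}-{r}. [:- x s, 1:])" for r
  define L where "L = (\<Sum>r<n. smult (x r ^ (n-1) / D r) (B r))"
  have cardr: "card ({..<n}-{r}) = n - 1" if "r < n" for r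
    using that by simp
  have Bdeg: "degree (B r) = n-1" if "r < n" for r
    unfolding B_def using that by (subst degree_prod_sum_eq) auto
  have Blc: "coeff (B r) (n-1) = 1" if "r < n" for r
    using Bdeg[OF that] lead_coeff_prod[of "\<lambda>s. [:- x s, 1:]" "{..<n}-{r}"]
    unfolding B_def by simp
  have Dnz: "D r \<noteq> 0" if "r < n" for r
    unfolding D_def using dist that by (auto simp: prod_zero_iff)
  have evalB: "poly (B r) (x s) = (if s = r then D r else 0)" if "r < n" "s < n" for r s
    unfolding B_def D_def poly_prod using that dist
    by (auto simp: prod_zero_iff)
  have evalL: "poly L (x s) = x s ^ (n-1)" if "s < n" for s
  proof -
    have "poly L (x s) = (\<Sum>r<n. x r ^ (n-1) / D r * poly (B r) (x s))"
      unfolding L_def poly_sum by simp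
    also have "\<dots> = (\<Sum>r<n. if r = s then x s ^ (n-1) else 0)"
      by (rule sum.cong) (use that evalB Dnz in auto)
    also have "\<dots> = x s ^ (n-1)" using that by simp
    finally show ?thesis .
  qed
  have degL: "degree L \<le> n - 1"
    unfolding L_def by (intro degree_sum_le) (auto simp: Bdeg)
  have cardA: "card (x ` {..<n}) = n"
    by (subst card_image) (auto intro!: inj_onI dest: dist)
  have "L = monom 1 (n-1)"
    by (rule poly_eqI_degree[where A = "x ` {..<n}"])
       (use evalL cardA degL npos in \<open>auto simp: poly_monom degree_monom_eq\<close>)
  hence "coeff L (n-1) = 1" by simp
  hence "(\<Sum>r<n. x r ^ (n-1) / D r * coeff (B r) (n-1)) = 1"
    unfolding L_def coeff_sum coeff_smult by simp
  hence "(\<Sum>r<n. x r ^ (n-1) / D r) = 1"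
    by (metis (no_types, lifting) Blc lessThan_iff mult.right_neutral sum.cong)
  moreover have "1 / (\<Prod>s\<in>{..<n}-{r}. (1 - x s / x r)) = x r ^ (n-1) / D r" if "r < n" for r
  proof -
    have "(\<Prod>s\<in>{..<n}-{r}. (1 - x s / x r)) = (\<Prod>s\<in>{..<n}-{r}. (x r - x s) / x r)"
      by (rule prod.cong) (use nz[OF that] in \<open>auto simp: field_simps\<close>)
    also have "\<dots> = D r / x r ^ (n-1)"
      unfolding D_def by (simp add: prod_dividef cardr[OF that])
    finally show ?thesis by simp
  qed
  ultimately show ?thesis by simp
qed

lemma finite_inj_self_bij:
  assumes "finite A" "g ` A \<subseteq> A" "inj_on g A"
  shows "bij_betw g A A"
  using endo_inj_surj[OF assms] assms(3) by (simp add: bij_betw_def)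

lemma card_fiber_perms:
  fixes f :: "'a \<Rightarrow> 'b"
  assumes fin: "finite S"
  shows "card {p. p permutes S \<and> (\<forall>x\<in>S. f (p x) = f x)}
         = (\<Prod>v\<in>f`S. fact (card {x\<in>S. f x = v}))"
proof -
  define F where "F v = {x\<in>S. f x = v}" for v
  define St where "St = {p. p permutes S \<and> (\<forall>x\<in>S. f (p x) = f x)}"
  define Ph where "Ph p = (\<lambda>v\<in>f`S. (\<lambda>x. if x \<in> S \<and> f x = v then p x else x))" for p :: "'a \<Rightarrow> 'a"
  define PE where "PE = (\<Pi>\<^sub>E v\<in>f`S. {g. g permutes F v})"
  have finF: "finite (F v)" for v unfolding F_def using fin by simp
  have inj: "inj_on Ph St"
  proof (rule inj_onI)
    fix p p' assume p: "p \<in> St" and p': "p' \<in> St" and eq: "Ph p = Ph p'"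
    show "p = p'"
    proof
      fix x show "p x = p' x"
      proof (cases "x \<in> S")
        case True
        have "Ph p (f x) x = Ph p' (f x) x" using eq by simp
        thus ?thesis using True unfolding Ph_def by simp
      next
        case False
        thus ?thesis using p p' unfolding St_def by (simp add: permutes_not_in[of p S x] permutes_not_in[of p' S x])
      qed
    qed
  qed
  have img1: "Ph ` St \<subseteq> PE"
  proof
    fix G assume "G \<in> Ph ` St"
    then obtain p where p: "p \<in> St" and G: "G = Ph p" by auto
    have pS: "p permutes S" and pf: "\<forall>x\<in>S. f (p x) = f x" using p unfolding St_def by auto
    have "(\<lambda>x. if x \<in> S \<and> f x = v then p x else x) permutes F v" if "v \<in> f ` S" for v
    proof (rule bij_imp_permutes)
      show "bij_betw (\<lambda>x. if x \<in> S \<and> f x = v then p x else x) (F v) (F v)"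
      proof (rule finite_inj_self_bij[OF finF])
        show "(\<lambda>x. if x \<in> S \<and> f x = v then p x else x) ` F v \<subseteq> F v"
          using pf permutes_in_image[OF pS] unfolding F_def by auto
        show "inj_on (\<lambda>x. if x \<in> S \<and> f x = v then p x else x) (F v)"
          using permutes_inj[OF pS] unfolding F_def inj_on_def by auto
      qed
    qed (auto simp: F_def)
    thus "G \<in> PE" unfolding G PE_def Ph_def by auto
  qed
  have img2: "PE \<subseteq> Ph ` St"
  proof
    fix G assume G: "G \<in> PE"
    have Gp: "G v permutes F v" if "v \<in> f ` S" for v using G that unfolding PE_def by auto
    have Gext: "G v = undefined" if "v \<notin> f ` S" for v using G that unfolding PE_def by auto
    define p where "p x = (if x \<in> S then G (f x) x else x)" for x
    have Gin: "G (f x) x \<in> F (f x)" if "x \<in> S" for x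
      using permutes_in_image[OF Gp[of "f x"]] that unfolding F_def by auto
    have pf: "\<forall>x\<in>S. f (p x) = f x" using Gin unfolding p_def F_def by auto
    have pS: "p permutes S"
    proof (rule bij_imp_permutes)
      show "bij_betw p S S"
      proof (rule finite_inj_self_bij[OF fin])
        show "p ` S \<subseteq> S" using Gin unfolding p_def F_def by auto
        show "inj_on p S"
        proof (rule inj_onI)
          fix x y assume x: "x \<in> S" and y: "y \<in> S" and e: "p x = p y"
          have "f x = f y" using pf x y e by metis
          hence "G (f x) x = G (f x) y" using e x y unfolding p_def by simp
          moreover have "x \<in> F (f x)" "y \<in> F (f x)" using x y \<open>f x = f y\<close> unfolding F_def by auto
          ultimately show "x = y" using permutes_inj[OF Gp[of "f x"]] x
            by (auto dest: injD)
        qed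
      qed
    qed (simp add: p_def)
    have "Ph p = G"
    proof
      fix v show "Ph p v = G v"
      proof (cases "v \<in> f ` S")
        case True
        show ?thesis
        proof
          fix x
          show "Ph p v x = G v x"
          proof (cases "x \<in> S \<and> f x = v")
            case True thus ?thesis using \<open>v \<in> f ` S\<close> unfolding Ph_def p_def by auto
          next
            case False
            hence "x \<notin> F v" unfolding F_def by auto
            hence "G v x = x" using permutes_not_in[OF Gp[OF True]] by simp
            thus ?thesis using False True unfolding Ph_def by auto
          qed
        qed
      next
        case False thus ?thesis using Gext unfolding Ph_def by auto
      qed
    qed
    moreover have "p \<in> St" using pS pf unfolding St_def by auto
    ultimately show "G \<in> Ph ` St" by blast
  qed
  have "bij_betw Ph St PE" using inj img1 img2 unfolding bij_betw_def by auto
  hence "card St = card PE" by (rule bij_betw_same_card)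
  also have "\<dots> = (\<Prod>v\<in>f`S. card {g. g permutes F v})"
    unfolding PE_def using fin by (simp add: card_PiE)
  also have "\<dots> = (\<Prod>v\<in>f`S. fact (card (F v)))"
    by (rule prod.cong) (auto intro: card_permutations finF)
  finally show ?thesis unfolding St_def F_def .
qed

fun toI :: "nat \<Rightarrow> nat list \<Rightarrow> nat list" where
  "toI b [] = []"
| "toI b (x # xs) = replicate x b @ toI (Suc b) xs"

definition comps :: "nat \<Rightarrow> nat \<Rightarrow> nat list set" where
  "comps m k = {d. length d = m \<and> sum_list d = k}"

lemma length_toI: "length (toI b d) = sum_list d"
  by (induction d arbitrary: b) auto

lemma set_toI: "set (toI b d) \<subseteq> {b..<b + length d}"
  by (induction d arbitrary: b) (auto, fastforce+)

lemma sorted_toI: "sorted (toI b d)"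
proof (induction d arbitrary: b)
  case (Cons x xs)
  show ?case using Cons.IH[of "Suc b"] set_toI[of "Suc b" xs]
    by (auto simp: sorted_append)
qed simp

lemma count_toI: "count (mset (toI b d)) v = (if b \<le> v \<and> v < b + length d then d ! (v - b) else 0)"
proof (induction d arbitrary: b)
  case (Cons x xs)
  show ?case
  proof (cases "v = b")
    case True
    have "count (mset (toI (Suc b) xs)) v = 0" using Cons.IH[of "Suc b"] True by simp
    thus ?thesis using True by simp
  next
    case False
    thus ?thesis using Cons.IH[of "Suc b"]
      by (auto simp: nth_Cons' Suc_diff_Suc le_eq_less_or_eq)
  qed
qed simp

lemma filter_toI: "length (filter (\<lambda>x. x \<le> j) (toI b d)) = sum_list (take (Suc j - b) d)"
proof (induction d arbitrary: b)
  case (Cons x xs)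
  have "length (filter (\<lambda>x. x \<le> j) (toI b (x # xs))) =
        (if b \<le> j then x else 0) + sum_list (take (Suc j - Suc b) xs)"
    using Cons.IH[of "Suc b"] by (simp add: filter_replicate)
  also have "\<dots> = sum_list (take (Suc j - b) (x # xs))"
    by (cases "Suc j - b") (auto simp: Suc_diff_le)
  finally show ?case .
qed simp

lemma finite_comps: "finite (comps m k)"
proof -
  have "comps m k \<subseteq> {d. set d \<subseteq> {0..k} \<and> length d = m}"
    unfolding comps_def using member_le_sum_list by fastforce
  thus ?thesis by (rule finite_subset) (intro finite_lists_length_eq, simp)
qed

lemma toI_in: "d \<in> comps m k \<Longrightarrow> toI 1 d \<in> index_tuples k m"
  unfolding comps_def index_tuples_def
  using length_toI[of 1 d] sorted_toI[of 1 d] set_toI[of 1 d] by auto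

lemma inj_toI: "inj_on (toI 1) (comps m k)"
proof (rule inj_onI)
  fix d d' assume d: "d \<in> comps m k" and d': "d' \<in> comps m k" and e: "toI 1 d = toI 1 d'"
  show "d = d'"
  proof (rule nth_equalityI)
    show "length d = length d'" using d d' unfolding comps_def by simp
    fix l assume l: "l < length d"
    have "count (mset (toI 1 d)) (Suc l) = count (mset (toI 1 d')) (Suc l)" using e by simp
    thus "d ! l = d' ! l" using l \<open>length d = length d'\<close> by (simp add: count_toI)
  qed
qed

lemma toI_onto:
  assumes "i \<in> index_tuples k m"
  shows "i \<in> toI 1 ` comps m k"
proof -
  have len: "length i = k" and so: "sorted i" and st: "set i \<subseteq> {1..m}"
    using assms unfolding index_tuples_def by auto
  define d where "d = map (\<lambda>l. count (mset i) (Suc l)) [0..<m]"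
  have cnt: "count (mset (toI 1 d)) v = count (mset i) v" for v
  proof (cases "1 \<le> v \<and> v < 1 + m")
    case True thus ?thesis unfolding d_def count_toI by auto
  next
    case False
    hence "v \<notin> set i" using st by auto
    thus ?thesis using False unfolding d_def count_toI by (auto simp: count_mset_0_iff)
  qed
  hence ms: "mset (toI 1 d) = mset i" by (simp add: multiset_eqI)
  have "toI 1 d = i"
    using properties_for_sort[OF ms sorted_toI] so by (simp add: sorted_sort_id)
  moreover have "d \<in> comps m k"
  proof -
    have "sum_list d = length (toI 1 d)" by (simp add: length_toI)
    also have "\<dots> = k" using ms len by (metis size_mset)
    finally show ?thesis unfolding comps_def d_def by simp
  qed
  ultimately show ?thesis by blast
qed

lemma bij_toI: "bij_betw (toI 1) (comps m k) (index_tuples k m)"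
  unfolding bij_betw_def using inj_toI toI_in toI_onto by blast

lemma mset_rotate': "mset (rotate n xs) = mset xs"
proof -
  define j where "j = n mod length xs"
  have "mset (rotate n xs) = mset (drop j xs) + mset (take j xs)"
    by (simp add: rotate_drop_take j_def)
  also have "\<dots> = mset (take j xs) + mset (drop j xs)"
    by (rule add.commute)
  also have "\<dots> = mset (take j xs @ drop j xs)"
    by (simp only: mset_append)
  also have "\<dots> = mset xs" by simp
  finally show ?thesis .
qed

lemma prod_list_rotate: "prod_list (rotate n ys) = prod_list (ys :: 'a :: comm_monoid_mult list)"
proof -
  have "prod_list (rotate n ys) = prod_mset (mset (rotate n ys))" by (simp only: prod_mset_prod_list)
  also have "\<dots> = prod_mset (mset ys)" by (simp only: mset_rotate')
  also have "\<dots> = prod_list ys" by (simp only: prod_mset_prod_list)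
  finally show ?thesis .
qed

lemma prod_list_map_rotate:
  fixes f :: "'b \<Rightarrow> 'a :: comm_monoid_mult"
  shows "prod_list (map f (rotate n xs)) = prod_list (map f xs)"
  unfolding rotate_map[symmetric] by (rule prod_list_rotate)

lemma card_stab_toI: "card (stab (toI 1 d)) = prod_list (map fact d)"
proof -
  define i where "i = toI 1 d"
  have "stab i = {p. p permutes {0..<length i} \<and> (\<forall>x\<in>{0..<length i}. i ! (p x) = i ! x)}"
    unfolding stab_def by auto
  hence "card (stab i) = (\<Prod>v\<in>(!) i ` {0..<length i}. fact (card {x\<in>{0..<length i}. i ! x = v}))"
    using card_fiber_perms[of "{0..<length i}" "(!) i"] by simp
  also have "\<dots> = (\<Prod>v\<in>set i. fact (count (mset i) v))"
  proof -
    have "(!) i ` {0..<length i} = set i" by (auto simp: set_conv_nth)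
    moreover have "card {x\<in>{0..<length i}. i ! x = v} = count (mset i) v" for v
      by (simp only: count_mset count_list_eq_length_filter length_filter_conv_card)
         (rule arg_cong[where f=card], auto)
    ultimately show ?thesis by simp
  qed
  also have "\<dots> = (\<Prod>v\<in>{1..<1 + length d}. fact (count (mset i) v))"
  proof (rule prod.mono_neutral_left)
    show "finite {1..<1 + length d}" by simp
    show "set i \<subseteq> {1..<1 + length d}" using set_toI[of 1 d] by (simp add: i_def)
    show "\<forall>v\<in>{1..<1 + length d} - set i. fact (count (mset i) v) = 1"
      by (metis Diff_iff count_mset_0_iff fact_0)
  qed
  also have "\<dots> = (\<Prod>l<length d. fact (d ! l))"
  proof -
    have "{1..<1 + length d} = Suc ` {..<length d}" by (simp add: atLeastLessThanSuc_atLeastAtMost lessThan_atLeast0 image_Suc_atLeastLessThan)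
    thus ?thesis by (simp add: prod.reindex i_def count_toI)
  qed
  also have "\<dots> = prod_list (map fact d)"
    by (simp add: prod.list_conv_set_nth atLeast0LessThan)
  finally show ?thesis unfolding i_def .
qed

lemma comps_0: "comps 0 k = (if k = 0 then {[]} else {})"
  unfolding comps_def by auto

lemma comps_Suc: "comps (Suc m) k = (\<lambda>(x, d). x # d) ` (SIGMA x:{..k}. comps m (k - x))"
proof -
  have "d \<in> (\<lambda>(x, d). x # d) ` (SIGMA x:{..k}. comps m (k - x))" if "d \<in> comps (Suc m) k" for d
  proof -
    have "length d = Suc m" using that unfolding comps_def by simp
    then obtain x d' where d: "d = x # d'" by (cases d) auto
    thus ?thesis using that unfolding comps_def by (auto simp: image_iff)
  qed
  thus ?thesis unfolding comps_def by auto
qed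

lemma sum_comps: "(\<Sum>d\<in>comps m k. 1 / of_nat (prod_list (map fact d)) :: complex) = of_nat m ^ k / fact k"
proof (induction m arbitrary: k)
  case 0 thus ?case by (simp add: comps_0)
next
  case (Suc m)
  have inj: "inj_on (\<lambda>(x, d). x # d) (SIGMA x:{..k}. comps m (k - x))"
    by (auto simp: inj_on_def)
  have "(\<Sum>d\<in>comps (Suc m) k. 1 / of_nat (prod_list (map fact d)) :: complex)
      = (\<Sum>(x,d)\<in>(SIGMA x:{..k}. comps m (k - x)). 1 / of_nat (prod_list (map fact (x # d))))"
    unfolding comps_Suc by (subst sum.reindex[OF inj]) (simp add: case_prod_unfold)
  also have "\<dots> = (\<Sum>x\<le>k. \<Sum>d\<in>comps m (k - x). 1 / (fact x) * (1 / of_nat (prod_list (map fact d))))"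
    by (subst sum.Sigma[symmetric]) (auto simp: finite_comps)
  also have "\<dots> = (\<Sum>x\<le>k. 1 / fact x * (of_nat m ^ (k - x) / fact (k - x)))"
    by (rule sum.cong[OF refl], simp only: sum_distrib_left[symmetric] Suc.IH)
  also have "\<dots> = (\<Sum>x\<le>k. of_nat (k choose x) * 1 ^ x * of_nat m ^ (k - x)) / fact k"
    by (simp add: sum_divide_distrib binomial_fact)
  also have "\<dots> = of_nat (Suc m) ^ k / fact k"
  proof -
    have "(1 + of_nat m :: complex) ^ k = (\<Sum>x\<le>k. of_nat (k choose x) * 1 ^ x * of_nat m ^ (k - x))"
      by (rule binomial_ring)
    thus ?thesis by (simp add: add.commute)
  qed
  finally show ?case .
qed

lemma intervals_prod:
  fixes F :: "nat \<Rightarrow> nat \<Rightarrow> complex"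
  assumes "sorted i" "set i \<subseteq> {lo..m}"
  shows "(\<Prod>j\<in>{lo..<(if i = [] then m else i ! 0)}. F j 0) *
         (\<Prod>r<length i. \<Prod>j\<in>{i ! r..<(if Suc r < length i then i ! Suc r else m)}. F j (Suc r))
         = (\<Prod>j\<in>{lo..<m}. F j (length (filter (\<lambda>x. x \<le> j) i)))"
  using assms
proof (induction i arbitrary: lo F)
  case Nil thus ?case by simp
next
  case (Cons x xs)
  have so: "sorted xs" and xge: "\<forall>y\<in>set xs. x \<le> y" using Cons.prems(1) by auto
  have xr: "lo \<le> x" "x \<le> m" using Cons.prems(2) by auto
  have st: "set xs \<subseteq> {x..m}" using Cons.prems(2) xge by auto
  have IH: "(\<Prod>j\<in>{x..<(if xs = [] then m else xs ! 0)}. F j (Suc 0)) *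
         (\<Prod>r<length xs. \<Prod>j\<in>{xs ! r..<(if Suc r < length xs then xs ! Suc r else m)}. F j (Suc (Suc r)))
         = (\<Prod>j\<in>{x..<m}. F j (Suc (length (filter (\<lambda>y. y \<le> j) xs))))"
    using Cons.IH[OF so st, of "\<lambda>j c. F j (Suc c)"] by simp
  have "(\<Prod>r<length (x # xs). \<Prod>j\<in>{(x # xs) ! r..<(if Suc r < length (x # xs) then (x # xs) ! Suc r else m)}. F j (Suc r))
      = (\<Prod>j\<in>{x..<(if xs = [] then m else xs ! 0)}. F j (Suc 0)) *
        (\<Prod>r<length xs. \<Prod>j\<in>{xs ! r..<(if Suc r < length xs then xs ! Suc r else m)}. F j (Suc (Suc r)))"
    by (simp only: length_Cons prod.lessThan_Suc_shift) (cases xs, auto)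
  also have "\<dots> = (\<Prod>j\<in>{x..<m}. F j (length (filter (\<lambda>y. y \<le> j) (x # xs))))"
    unfolding IH by (rule prod.cong) auto
  finally have A: "(\<Prod>r<length (x # xs). \<Prod>j\<in>{(x # xs) ! r..<(if Suc r < length (x # xs) then (x # xs) ! Suc r else m)}. F j (Suc r))
     = (\<Prod>j\<in>{x..<m}. F j (length (filter (\<lambda>y. y \<le> j) (x # xs))))" .
  have B: "(\<Prod>j\<in>{lo..<x}. F j 0) = (\<Prod>j\<in>{lo..<x}. F j (length (filter (\<lambda>y. y \<le> j) (x # xs))))"
  proof (rule prod.cong)
    fix j assume "j \<in> {lo..<x}"
    hence "filter (\<lambda>y. y \<le> j) (x # xs) = []" using xge by (auto simp: filter_empty_conv)
    thus "F j 0 = F j (length (filter (\<lambda>y. y \<le> j) (x # xs)))" by simp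
  qed simp
  show ?case
    unfolding A using B prod.atLeastLessThan_concat[OF xr, of "\<lambda>j. F j (length (filter (\<lambda>y. y \<le> j) (x # xs)))"]
    by simp
qed

lemma qpoch_interval: "qpoch q (q ^ a * P) n = (\<Prod>j\<in>{a..<a + n}. (1 - q ^ j * P))"
proof (induction n)
  case 0 thus ?case by (simp add: qpoch_def)
next
  case (Suc n)
  have "qpoch q (q ^ a * P) (Suc n) = qpoch q (q ^ a * P) n * (1 - q ^ a * P * q ^ n)"
    by (simp add: qpoch_def)
  also have "\<dots> = (\<Prod>j\<in>{a..<a + n}. (1 - q ^ j * P)) * (1 - q ^ (a + n) * P)"
    unfolding Suc.IH by (simp add: power_add mult_ac)
  also have "\<dots> = (\<Prod>j\<in>{a..<a + Suc n}. (1 - q ^ j * P))"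
    by (simp add: prod.atLeastLessThan_Suc)
  finally show ?case .
qed

lemma bracket_denom_prod:
  assumes "sorted i" "set i \<subseteq> {1..m}" "i \<noteq> []"
  shows "bracket_denom m q t i =
    (\<Prod>j\<in>{1..<m}. (1 - q ^ j * (\<Prod>s<length (filter (\<lambda>x. x \<le> j) i). t ! s)))"
proof -
  define F where "F j c = (1 - q ^ j * (\<Prod>s<c. t ! s))" for j c
  have "i ! 0 \<in> set i" using assms(3) by simp
  hence i0: "1 \<le> i ! 0" using assms(2) by auto
  have "qpoch q q (i ! 0 - 1) = qpoch q (q ^ 1 * 1) (i ! 0 - 1)" by simp
  also have "\<dots> = (\<Prod>j\<in>{1..<i ! 0}. F j 0)"
    unfolding qpoch_interval F_def using i0 by simp
  finally have A: "qpoch q q (i ! 0 - 1) = (\<Prod>j\<in>{1..<(if i = [] then m else i ! 0)}. F j 0)"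
    using assms(3) by simp
  have B: "qpoch q (q ^ (i ! r) * (\<Prod>s\<le>r. t ! s)) ((if Suc r < length i then i ! Suc r else m) - i ! r)
      = (\<Prod>j\<in>{i ! r..<(if Suc r < length i then i ! Suc r else m)}. F j (Suc r))" if r: "r < length i" for r
  proof -
    have "i ! r \<in> set i" using r by simp
    hence "i ! r \<le> m" using assms(2) by (meson atLeastAtMost_iff subsetD)
    hence le: "i ! r \<le> (if Suc r < length i then i ! Suc r else m)"
      using assms(1) r by (auto simp: sorted_iff_nth_mono)
    show ?thesis unfolding qpoch_interval F_def using le
      by (simp add: lessThan_Suc_atMost)
  qed
  have "bracket_denom m q t i = (\<Prod>j\<in>{1..<(if i = [] then m else i ! 0)}. F j 0) *
     (\<Prod>r<length i. \<Prod>j\<in>{i ! r..<(if Suc r < length i then i ! Suc r else m)}. F j (Suc r))"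
    unfolding bracket_denom_def A using B by simp
  also have "\<dots> = (\<Prod>j\<in>{1..<m}. F j (length (filter (\<lambda>x. x \<le> j) i)))"
    by (rule intervals_prod[OF assms(1,2)])
  finally show ?thesis unfolding F_def .
qed

definition Zp :: "complex list \<Rightarrow> nat \<Rightarrow> complex" where
  "Zp t n = (\<Prod>l<n. t ! (l mod length t))"

definition Cs :: "nat list \<Rightarrow> nat \<Rightarrow> nat" where
  "Cs d j = sum_list (take j d)"

definition Ef :: "nat \<Rightarrow> complex \<Rightarrow> complex list \<Rightarrow> nat \<Rightarrow> nat list \<Rightarrow> complex" where
  "Ef m q t a d = (\<Prod>j\<in>{1..<m}. (1 - q ^ j * Zp t (a + Cs d j) / Zp t a))"

lemma Zp_add: "Zp t (a + c) = Zp t a * (\<Prod>s<c. t ! ((a + s) mod length t))"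
  by (induction c) (simp_all add: Zp_def)

lemma Zp_len: "Zp t (length t) = prod_list t"
  unfolding Zp_def by (simp add: prod.list_conv_set_nth atLeast0LessThan)

lemma Zp_add_len:
  assumes "length t > 0"
  shows "Zp t (x + length t) = Zp t x * prod_list t"
proof -
  have "Zp t (length t + x) = Zp t (length t) * (\<Prod>s<x. t ! ((length t + s) mod length t))"
    by (rule Zp_add)
  also have "(\<Prod>s<x. t ! ((length t + s) mod length t)) = Zp t x"
    unfolding Zp_def by simp
  finally show ?thesis by (simp add: Zp_len add.commute mult.commute)
qed

lemma Zp_period:
  assumes "length t > 0"
  shows "Zp t (n + length t * e) = Zp t n * prod_list t ^ e"
proof (induction e)
  case (Suc e)
  have "Zp t (n + length t * Suc e) = Zp t ((n + length t * e) + length t)"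
    by (simp add: add_ac)
  also have "\<dots> = Zp t n * prod_list t ^ Suc e"
    unfolding Zp_add_len[OF assms] Suc.IH by simp
  finally show ?case .
qed simp

lemma Zp_nz:
  assumes "length t > 0" "0 \<notin> set t"
  shows "Zp t n \<noteq> 0"
proof -
  have "t ! (l mod length t) \<noteq> 0" for l
    using assms nth_mem[of "l mod length t" t] by (metis mod_less_divisor)
  thus ?thesis unfolding Zp_def by (simp add: prod_zero_iff)
qed

lemma rot_prefix:
  assumes "length t > 0" "0 \<notin> set t" "c \<le> length t"
  shows "(\<Prod>s<c. rotate a t ! s) = Zp t (a + c) / Zp t a"
proof -
  have "(\<Prod>s<c. rotate a t ! s) = (\<Prod>s<c. t ! ((a + s) mod length t))"
    by (rule prod.cong) (use assms(3) in \<open>auto simp: nth_rotate\<close>)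
  thus ?thesis using Zp_add[of t a c] Zp_nz[OF assms(1,2)] by simp
qed

lemma Cs_le: "Cs d j \<le> sum_list d"
proof -
  have "sum_list d = sum_list (take j d) + sum_list (drop j d)"
    by (metis append_take_drop_id sum_list_append)
  thus ?thesis unfolding Cs_def by simp
qed

lemma bd_Ef:
  assumes d: "d \<in> comps m k" and k: "k > 0" and t: "length t = k" "0 \<notin> set t"
  shows "bracket_denom m q (rotate a t) (toI 1 d) = Ef m q t a d"
proof -
  have len: "length (toI 1 d) = k" using d by (simp add: length_toI comps_def)
  have st: "set (toI 1 d) \<subseteq> {1..m}" using set_toI[of 1 d] d by (auto simp: comps_def)
  have ne: "toI 1 d \<noteq> []" using len k by auto
  show ?thesis
    unfolding bracket_denom_prod[OF sorted_toI st ne] Ef_def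
  proof (rule prod.cong[OF refl])
    fix j assume j: "j \<in> {1..<m}"
    have "length (filter (\<lambda>x. x \<le> j) (toI 1 d)) = Cs d j"
      by (simp add: filter_toI Cs_def)
    moreover have "Cs d j \<le> length t" using Cs_le[of d j] d t by (simp add: comps_def)
    ultimately show "1 - q ^ j * (\<Prod>s<length (filter (\<lambda>x. x \<le> j) (toI 1 d)). rotate a t ! s) =
          1 - q ^ j * Zp t (a + Cs d j) / Zp t a"
      using rot_prefix[of t "Cs d j" a] t k by simp
  qed
qed

lemma Cs_rotate:
  assumes "r < length d" "j \<le> length d"
  shows "Cs (rotate r d) j + Cs d r =
    (if r + j \<le> length d then Cs d (r + j) else sum_list d + Cs d (r + j - length d))"
proof -
  have rot: "rotate r d = drop r d @ take r d" using assms(1) by (simp add: rotate_drop_take)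
  have A: "Cs (rotate r d) j = sum_list (take j (drop r d)) + sum_list (take (j - (length d - r)) (take r d))"
    unfolding Cs_def rot by simp
  have B: "Cs d (r + j) = Cs d r + sum_list (take j (drop r d))"
    unfolding Cs_def take_add by simp
  show ?thesis
  proof (cases "r + j \<le> length d")
    case True
    hence "j - (length d - r) = 0" by simp
    thus ?thesis using A B True by simp
  next
    case False
    have "take j (drop r d) = drop r d" using False by simp
    moreover have "take (j - (length d - r)) (take r d) = take (r + j - length d) d"
    proof -
      have "j - (length d - r) = r + j - length d" "r + j - length d \<le> r" using False assms by auto
      thus ?thesis by (simp add: min_def)
    qed
    moreover have "sum_list d = Cs d r + sum_list (drop r d)"
      unfolding Cs_def by (metis append_take_drop_id sum_list_append)
    ultimately show ?thesis using A False by (simp add: Cs_def)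
  qed
qed

lemma mod_add_inj_aux:
  assumes "(a + c) mod (k::nat) = (a' + c) mod k" "a < k" "a' < k" "a \<le> a'"
  shows "a = a'"
proof -
  have "k dvd (a' + c) - (a + c)" using assms(1,4) by (subst mod_eq_dvd_iff_nat[symmetric]) auto
  hence "k dvd a' - a" by simp
  moreover have "a' - a < k" using assms by simp
  ultimately have "a' - a = 0" using nat_dvd_not_less by blast
  thus ?thesis using assms(4) by simp
qed

lemma mod_add_inj:
  assumes "(a + c) mod (k::nat) = (a' + c) mod k" "a < k" "a' < k"
  shows "a = a'"
  using mod_add_inj_aux[OF assms] mod_add_inj_aux[OF assms(1)[symmetric] assms(3,2)] by linarith

lemma bij_shift:
  assumes "r < (m::nat)"
  shows "bij_betw (\<lambda>j. (r + j) mod m) {1..<m} ({..<m} - {r})"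
proof -
  have inj: "inj_on (\<lambda>j. (r + j) mod m) {1..<m}"
  proof (rule inj_onI)
    fix i j assume i: "i \<in> {1..<m}" and j: "j \<in> {1..<m}" and e: "(r + i) mod m = (r + j) mod m"
    have "(i + r) mod m = (j + r) mod m" using e by (simp only: add.commute)
    thus "i = j" using mod_add_inj[of i r m j] i j by simp
  qed
  have sub: "(\<lambda>j. (r + j) mod m) ` {1..<m} \<subseteq> {..<m} - {r}"
  proof
    fix y assume "y \<in> (\<lambda>j. (r + j) mod m) ` {1..<m}"
    then obtain j where j: "j \<in> {1..<m}" and y: "y = (r + j) mod m" by auto
    have "y < m" using y assms by simp
    moreover have "y \<noteq> r"
    proof
      assume "y = r"
      hence "(0 + r) mod m = (j + r) mod m" using y assms by (simp add: add.commute)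
      hence "0 = j" using mod_add_inj[of 0 r m j] j assms by simp
      thus False using j by simp
    qed
    ultimately show "y \<in> {..<m} - {r}" by simp
  qed
  have c1: "card ((\<lambda>j. (r + j) mod m) ` {1..<m}) = m - 1"
    using card_image[OF inj] by simp
  have c2: "card ({..<m} - {r}) = m - 1" using assms by simp
  have "(\<lambda>j. (r + j) mod m) ` {1..<m} = {..<m} - {r}"
    by (rule card_subset_eq) (use sub c1 c2 in auto)
  thus ?thesis using inj by (simp add: bij_betw_def)
qed

lemma Ef_rot:
  assumes d: "d \<in> comps m k" and a: "a < k" and r: "r < m" and k: "k > 0"
    and t: "length t = k" "0 \<notin> set t" and qm: "q ^ m * prod_list t = 1"
    and x: "x = (\<lambda>s. q ^ s * Zp t (a + Cs d s))"
  shows "Ef m q t ((a + Cs d r) mod k) (rotate r d) = (\<Prod>s\<in>{..<m}-{r}. (1 - x s / x r))"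
proof -
  define P where "P = prod_list t"
  define N where "N = a + Cs d r"
  define a' where "a' = N mod k"
  define e where "e = N div k"
  have Ndec: "N = a' + k * e" unfolding a'_def e_def by simp
  have ld: "length d = m" and sd: "sum_list d = k" using d by (auto simp: comps_def)
  have tl: "length t > 0" using t k by simp
  have Pnz: "P \<noteq> 0" using qm unfolding P_def by auto
  have qnz: "q \<noteq> 0" using qm r by (cases m) auto
  have Znz: "Zp t n \<noteq> 0" for n using Zp_nz[OF tl t(2)] .
  have per: "Zp t (n + k * e') = Zp t n * P ^ e'" for n e' using Zp_period[OF tl, of n e'] t unfolding P_def by simp
  have ratio: "Zp t (a' + c) / Zp t a' = Zp t (N + c) / Zp t N" for c
  proof -
    have "Zp t (N + c) = Zp t (a' + c) * P ^ e" using per[of "a' + c" e] Ndec by (simp add: add_ac)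
    moreover have "Zp t N = Zp t a' * P ^ e" using per[of a' e] Ndec by simp
    ultimately show ?thesis using Pnz Znz by (simp add: field_simps)
  qed
  have fac: "q ^ j * Zp t (a' + Cs (rotate r d) j) / Zp t a' = x ((r + j) mod m) / x r"
    if j: "j \<in> {1..<m}" for j
  proof -
    define C' where "C' = Cs (rotate r d) j"
    have CR: "C' + Cs d r = (if r + j \<le> m then Cs d (r + j) else k + Cs d (r + j - m))"
      unfolding C'_def using Cs_rotate[of r d j] r j ld sd by simp
    have lhs: "q ^ j * Zp t (a' + C') / Zp t a' = q ^ j * Zp t (N + C') / Zp t N"
    proof -
      have "q ^ j * (Zp t (a' + C') / Zp t a') = q ^ j * (Zp t (N + C') / Zp t N)"
        using ratio[of C'] by simp
      thus ?thesis by simp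
    qed
    show ?thesis
    proof (cases "r + j < m")
      case True
      hence NC: "N + C' = a + Cs d (r + j)" using CR unfolding N_def by simp
      have md: "(r + j) mod m = r + j" using True by simp
      show ?thesis unfolding C'_def[symmetric] lhs NC md
        using qnz Znz by (simp add: x N_def field_simps power_add)
    next
      case False
      define s where "s = r + j - m"
      have smod: "(r + j) mod m = s" unfolding s_def using False r j
        by (simp add: mod_if)
      have "N + C' = a + Cs d s + k"
      proof (cases "r + j \<le> m")
        case True
        hence "r + j = m" "s = 0" using False unfolding s_def by auto
        moreover have "Cs d m = k" unfolding Cs_def using ld sd by simp
        ultimately show ?thesis using CR unfolding N_def by (simp add: Cs_def)
      next
        case False thus ?thesis using CR unfolding N_def s_def by simp
      qed
      hence ZN: "Zp t (N + C') = Zp t (a + Cs d s) * P"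
        using per[of "a + Cs d s" 1] by simp
      have qq: "q ^ (r + j) = q ^ s * q ^ m" unfolding s_def using False
        by (simp add: power_add[symmetric])
      have qmP: "q ^ m * P = 1" using qm unfolding P_def .
      have "q ^ j * Zp t (N + C') / Zp t N = (q ^ s * Zp t (a + Cs d s)) / (q ^ r * Zp t N)"
      proof -
        have "q ^ j * Zp t (N + C') * (q ^ r * Zp t N) = q ^ (r + j) * P * Zp t (a + Cs d s) * Zp t N"
          unfolding ZN by (simp add: power_add mult_ac)
        also have "\<dots> = q ^ s * Zp t (a + Cs d s) * Zp t N"
          unfolding qq using qmP by (simp add: mult_ac)
        finally show ?thesis using qnz Znz by (simp add: field_simps)
      qed
      thus ?thesis unfolding C'_def[symmetric] lhs x smod N_def by simp
    qed
  qed
  have "Ef m q t a' (rotate r d) = (\<Prod>j\<in>{1..<m}. (1 - x ((r + j) mod m) / x r))"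
    unfolding Ef_def by (rule prod.cong[OF refl]) (simp add: fac)
  also have "\<dots> = (\<Prod>s\<in>{..<m}-{r}. (1 - x s / x r))"
    by (rule prod.reindex_bij_betw[OF bij_shift[OF r], of "\<lambda>s. 1 - x s / x r"])
  finally show ?thesis unfolding a'_def N_def .
qed

lemma sum_list_rotate: "sum_list (rotate n (xs :: nat list)) = sum_list xs"
proof -
  have "sum_list (rotate n xs) = sum_mset (mset (rotate n xs))" by (simp only: sum_mset_sum_list)
  also have "\<dots> = sum_mset (mset xs)" by (simp only: mset_rotate')
  also have "\<dots> = sum_list xs" by (simp only: sum_mset_sum_list)
  finally show ?thesis .
qed

lemma rotate_comps: "d \<in> comps m k \<Longrightarrow> rotate r d \<in> comps m k"
  unfolding comps_def by (simp add: sum_list_rotate)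

lemma rotate_back:
  assumes "length xs = n" "n > 0"
  shows "rotate (n - r mod n) (rotate r xs) = xs"
proof -
  have rm: "r mod n < n" using assms(2) by simp
  define A where "A = r div n"
  define B where "B = r mod n"
  have e: "r = n * A + B" unfolding A_def B_def by simp
  have "n - r mod n + r = n + n * A" using rm e unfolding B_def[symmetric] by linarith
  hence "n - r mod n + r = n * (Suc (r div n))" unfolding A_def by simp
  hence "(n - r mod n + r) mod n = 0" by simp
  hence "rotate (n - r mod n + r) xs = rotate 0 xs"
    using assms(1) by (metis rotate_conv_mod)
  thus ?thesis by (simp add: rotate_rotate)
qed

lemma rotate_inj_len:
  assumes "rotate r d = rotate r d'" "length d = length d'"
  shows "d = d'"
proof (cases "length d = 0")
  case True thus ?thesis using assms by simp
next
  case False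
  thus ?thesis using rotate_back[of d "length d" r] rotate_back[of d' "length d" r] assms by simp
qed

theorem theorem9p2:
  fixes m k :: nat and q :: complex and t :: "complex list"
  assumes "m > 0" and "k > 0" and "length t = k"
    and "q ^ m * prod_list t = 1"
    and "\<forall>j<k. \<forall>i\<in>index_tuples k m. bracket_denom m q (rotate j t) i \<noteq> 0"
  shows "(\<Sum>j<k. tilde_sum m q (rotate j t)) = of_nat (m ^ (k - 1)) / of_nat (fact (k - 1))"
proof -
  note mpos = assms(1) and kpos = assms(2) and tlen = assms(3) and qm = assms(4) and hyp = assms(5)
  have t0: "0 \<notin> set t"
  proof
    assume "0 \<in> set t"
    hence "prod_list t = 0" by (simp add: prod_list_zero_iff)
    with qm show False by simp
  qed
  have qnz: "q \<noteq> 0" using qm mpos by (cases m) auto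
  have tl: "length t > 0" using tlen kpos by simp
  define W where "W d = (1 / of_nat (prod_list (map fact d)) :: complex)" for d :: "nat list"
  define Dom where "Dom = {..<k} \<times> comps m k"
  define G where "G p = W (snd p) / Ef m q t (fst p) (snd p)" for p
  define sg where "sg r p = ((fst p + Cs (snd p) r) mod k, rotate r (snd p))" for r p
  have finDom: "finite Dom" unfolding Dom_def by (simp add: finite_comps)
  have Ts: "tilde_sum m q (rotate a t) = (\<Sum>d\<in>comps m k. W d / Ef m q t a d)" for a
  proof -
    have "tilde_sum m q (rotate a t) =
        (\<Sum>i\<in>index_tuples k m. bracket m q (rotate a t) i / of_nat (card (stab i)))"
      unfolding tilde_sum_def using tlen by simp
    also have "\<dots> = (\<Sum>d\<in>comps m k. bracket m q (rotate a t) (toI 1 d) / of_nat (card (stab (toI 1 d))))"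
      by (rule sum.reindex_bij_betw[OF bij_toI, symmetric])
    also have "\<dots> = (\<Sum>d\<in>comps m k. W d / Ef m q t a d)"
    proof (rule sum.cong[OF refl])
      fix d assume d: "d \<in> comps m k"
      show "bracket m q (rotate a t) (toI 1 d) / of_nat (card (stab (toI 1 d))) = W d / Ef m q t a d"
        unfolding bracket_def bd_Ef[OF d kpos tlen t0] card_stab_toI W_def by simp
    qed
    finally show ?thesis .
  qed
  have LHS: "(\<Sum>j<k. tilde_sum m q (rotate j t)) = sum G Dom"
    unfolding Ts Dom_def G_def sum.cartesian_product
    by (rule sum.cong[OF refl]) (auto simp: case_prod_beta)
  have Winv: "W (rotate r d) = W d" for r d
    unfolding W_def by (simp add: prod_list_map_rotate)
  have rot_inv: "sum G Dom = (\<Sum>p\<in>Dom. W (snd p) / Ef m q t (fst (sg r p)) (snd (sg r p)))" for r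
  proof -
    have sub: "sg r ` Dom \<subseteq> Dom"
      unfolding Dom_def sg_def using kpos by (auto intro: rotate_comps)
    have inj: "inj_on (sg r) Dom"
    proof (rule inj_onI)
      fix p p' assume p: "p \<in> Dom" and p': "p' \<in> Dom" and e: "sg r p = sg r p'"
      have "rotate r (snd p) = rotate r (snd p')" using e unfolding sg_def by simp
      moreover have "length (snd p) = length (snd p')" using p p' unfolding Dom_def comps_def by auto
      ultimately have sd: "snd p = snd p'" by (rule rotate_inj_len)
      have "(fst p + Cs (snd p) r) mod k = (fst p' + Cs (snd p) r) mod k"
        using e sd unfolding sg_def by simp
      moreover have "fst p < k" "fst p' < k" using p p' unfolding Dom_def by auto
      ultimately have "fst p = fst p'" by (rule mod_add_inj)
      thus "p = p'" using sd by (simp add: prod_eq_iff)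
    qed
    have img: "sg r ` Dom = Dom" by (rule endo_inj_surj[OF finDom sub inj])
    have "sum G Dom = sum G (sg r ` Dom)" by (simp only: img)
    also have "\<dots> = sum (G \<circ> sg r) Dom" by (rule sum.reindex[OF inj])
    also have "\<dots> = (\<Sum>p\<in>Dom. W (snd p) / Ef m q t (fst (sg r p)) (snd (sg r p)))"
      unfolding G_def by (simp add: sg_def Winv)
    finally show ?thesis .
  qed
  have inner: "(\<Sum>r<m. 1 / Ef m q t (fst (sg r p)) (snd (sg r p))) = 1" if p: "p \<in> Dom" for p
  proof -
    obtain a d where pad: "p = (a, d)" by (cases p)
    have a: "a < k" and d: "d \<in> comps m k" using p unfolding pad Dom_def by auto
    define x where "x = (\<lambda>s. q ^ s * Zp t (a + Cs d s))"
    have ER: "Ef m q t (fst (sg r p)) (snd (sg r p)) = (\<Prod>s\<in>{..<m}-{r}. (1 - x s / x r))" if r: "r < m" for r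
      unfolding pad sg_def using Ef_rot[OF d a r kpos tlen t0 qm x_def] by simp
    have xnz: "x i \<noteq> 0" for i unfolding x_def using qnz Zp_nz[OF tl t0] by simp
    have xd: "x i \<noteq> x j" if i: "i < m" and j: "j < m" and ij: "i \<noteq> j" for i j
    proof
      assume eq: "x i = x j"
      have j0: "(a + Cs d i) mod k < k" using kpos by simp
      have tup: "toI 1 (rotate i d) \<in> index_tuples k m" by (rule toI_in[OF rotate_comps[OF d]])
      have "bracket_denom m q (rotate ((a + Cs d i) mod k) t) (toI 1 (rotate i d)) \<noteq> 0"
        using hyp j0 tup by blast
      hence "Ef m q t ((a + Cs d i) mod k) (rotate i d) \<noteq> 0"
        unfolding bd_Ef[OF rotate_comps[OF d] kpos tlen t0] .
      hence "(\<Prod>s\<in>{..<m}-{i}. (1 - x s / x i)) \<noteq> 0"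
        unfolding Ef_rot[OF d a i kpos tlen t0 qm x_def] .
      moreover have "(\<Prod>s\<in>{..<m}-{i}. (1 - x s / x i)) = 0"
      proof (rule prod_zero)
        show "\<exists>s\<in>{..<m}-{i}. 1 - x s / x i = 0"
          using j ij eq xnz[of i] by (intro bexI[of _ j]) auto
      qed simp
      ultimately show False by simp
    qed
    have "(\<Sum>r<m. 1 / Ef m q t (fst (sg r p)) (snd (sg r p))) = (\<Sum>r<m. 1 / (\<Prod>s\<in>{..<m}-{r}. (1 - x s / x r)))"
      by (rule sum.cong[OF refl]) (simp add: ER)
    also have "\<dots> = 1" by (rule lagrange_sum) (use xnz xd mpos in auto)
    finally show ?thesis .
  qed
  have "of_nat m * sum G Dom = (\<Sum>r<m. sum G Dom)" by simp
  also have "\<dots> = (\<Sum>r<m. \<Sum>p\<in>Dom. W (snd p) * (1 / Ef m q t (fst (sg r p)) (snd (sg r p))))"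
    by (rule sum.cong[OF refl]) (simp add: rot_inv)
  also have "\<dots> = (\<Sum>p\<in>Dom. W (snd p) * (\<Sum>r<m. 1 / Ef m q t (fst (sg r p)) (snd (sg r p))))"
    by (simp add: sum.swap[of _ "{..<m}"] sum_distrib_left)
  also have "\<dots> = (\<Sum>p\<in>Dom. W (snd p))"
    by (rule sum.cong[OF refl]) (simp add: inner)
  also have "\<dots> = (\<Sum>(a,d)\<in>{..<k} \<times> comps m k. W d)"
    unfolding Dom_def by (rule sum.cong) auto
  also have "\<dots> = (\<Sum>a<k. \<Sum>d\<in>comps m k. W d)"
    by (rule sum.cartesian_product[symmetric])
  also have "\<dots> = of_nat k * (\<Sum>d\<in>comps m k. W d)"
    by simp
  also have "\<dots> = of_nat k * (of_nat m ^ k / fact k)"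
    unfolding W_def by (simp only: sum_comps)
  finally have main: "of_nat m * sum G Dom = of_nat k * (of_nat m ^ k / fact k)" .
  obtain k' where k': "k = Suc k'" using kpos by (cases k) auto
  have "of_nat m * sum G Dom = of_nat m * (of_nat m ^ k' / fact k')"
  proof -
    have cancel: "c * (a / (c * F)) = a / F" if "c \<noteq> 0" for c a F :: complex
      using that by (cases "F = 0") (auto simp: field_simps)
    have "of_nat k * (of_nat m ^ k / fact k) =
        (of_nat (Suc k') :: complex) * ((of_nat m * of_nat m ^ k') / (of_nat (Suc k') * fact k'))"
      unfolding k' fact_Suc by simp
    also have "\<dots> = of_nat m * of_nat m ^ k' / fact k'"
      by (rule cancel) (rule of_nat_neq_0)
    finally show ?thesis unfolding main by simp
  qed
  hence "sum G Dom = of_nat m ^ k' / fact k'"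
    by (rule mult_left_cancel[THEN iffD1, rotated]) (use mpos in simp)
  thus ?thesis unfolding LHS by (simp add: k')
qed

end
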